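(* Let $E$ be a Hermite–Biehler entire function with no real zeros and let $f \in \mathcal{H}^{\infty}(E)$ be a real entire function. Suppose $\lvert f(\xi)\rvert = \lvert E(\xi)\rvert\,\lVert f/E\rVert_\infty$ for some $\xi\in\mathbb{R}$. Let $\alpha\in\mathbb{R}$ be such that $E(\xi) = e^{-i\alpha}\lvert E(\xi)\rvert$, and let $a_l$ and $a_r$ denote the simple zeros of $A_\alpha$ to the left and to the right of $\xi$, respectively. Then $$\lvert f(x)\rvert \geq \lVert f/E\rVert_\infty\, A_\alpha(x), \qquad a_l \leq x \leq a_r.$$
   Context: An entire function $E$ is Hermite–Biehler if $\lvert E(\overline{z})\rvert < \lvert E(z)\rvert$ for all $z$ in the upper half-plane $\mathbb{C}_+$. For an entire function $g$, $g^{\#}(z) = \overline{g(\overline{z})}$; $g$ is real entire if it is real on the real axis. $\mathcal{H}^{\infty}(E)$ is the set of entire functions $f$ such that $f/E$ and $f^{\#}/E$ are bounded analytic functions on $\mathbb{C}_+$, with $\lVert f/E\rVert_\infty = \sup_{x\in\mathbb{R}} \lvert f(x)/E(x)\rvert$. For $\alpha\in\mathbb{R}$, $A_\alpha = (e^{i\alpha}E + e^{-i\alpha}E^{\#})/2$ is the real part of $e^{i\alpha}E$. *)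

theory Defs
  imports "HOL-Analysis.Analysis"
begin

definition hermite_biehler :: "(complex \<Rightarrow> complex) \<Rightarrow> bool" where
  "hermite_biehler E \<longleftrightarrow> E holomorphic_on UNIV \<and>
     (\<forall>z. 0 < Im z \<longrightarrow> cmod (E (cnj z)) < cmod (E z))"

definition sharp :: "(complex \<Rightarrow> complex) \<Rightarrow> complex \<Rightarrow> complex" where
  "sharp g z = cnj (g (cnj z))"

definition real_entire :: "(complex \<Rightarrow> complex) \<Rightarrow> bool" where
  "real_entire g \<longleftrightarrow> g holomorphic_on UNIV \<and> (\<forall>x::real. g (complex_of_real x) \<in> \<real>)"

definition upper_half_plane :: "complex set" where
  "upper_half_plane = {z. 0 < Im z}"

definition H_inf :: "(complex \<Rightarrow> complex) \<Rightarrow> (complex \<Rightarrow> complex) set" where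
  "H_inf E = {f. f holomorphic_on UNIV \<and>
     (\<lambda>z. f z / E z) holomorphic_on upper_half_plane \<and>
     bounded ((\<lambda>z. f z / E z) ` upper_half_plane) \<and>
     (\<lambda>z. sharp f z / E z) holomorphic_on upper_half_plane \<and>
     bounded ((\<lambda>z. sharp f z / E z) ` upper_half_plane)}"

definition sup_norm :: "(complex \<Rightarrow> complex) \<Rightarrow> (complex \<Rightarrow> complex) \<Rightarrow> real" where
  "sup_norm f E = (SUP x::real. cmod (f (complex_of_real x) / E (complex_of_real x)))"

definition A_alpha :: "(complex \<Rightarrow> complex) \<Rightarrow> real \<Rightarrow> complex \<Rightarrow> complex" where
  "A_alpha E \<alpha> z = (exp (\<i> * complex_of_real \<alpha>) * E z + exp (- \<i> * complex_of_real \<alpha>) * sharp E z) / 2"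

end

theory Submission
  imports Defs "HOL-Complex_Analysis.Complex_Analysis"
begin

lemma PL:
  fixes g :: "complex \<Rightarrow> complex" and U :: "complex set"
  assumes hol: "g holomorphic_on U" and U: "open U" "{z. 0 \<le> Im z} \<subseteq> U"
    and bnd: "\<And>z. 0 < Im z \<Longrightarrow> cmod (g z) \<le> B"
    and real1: "\<And>x::real. cmod (g (of_real x)) \<le> 1"
    and z0: "0 \<le> Im z0"
  shows "cmod (g z0) \<le> 1"
proof (cases "Im z0 = 0")
  case True
  then have "z0 = of_real (Re z0)" by (simp add: complex_eq_iff)
  then show ?thesis using real1 by metis
next
  case False
  with z0 have iz0: "0 < Im z0" by simp
  show ?thesis
  proof (rule ccontr)
    assume "\<not> ?thesis"
    then have c1: "1 < cmod (g z0)" by simp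
    obtain n where n: "cmod (z0 + \<i>) < cmod (g z0) ^ n" using real_arch_pow[OF c1] by blast
    define B1 where "B1 = max 1 B"
    define R where "R = cmod z0 + 2 + B1 ^ n"
    define D where "D = {z. 0 < Im z \<and> cmod z < R}"
    define C where "C = {z. 0 \<le> Im z \<and> cmod z \<le> R}"
    define h where "h z = g z ^ n / (z + \<i>)" for z
    have ne: "z + \<i> \<noteq> 0" if "0 \<le> Im z" for z
    proof
      assume "z + \<i> = 0" then have "Im (z + \<i>) = 0" by simp
      then show False using that by simp
    qed
    have ge1: "1 \<le> cmod (z + \<i>)" if "0 \<le> Im z" for z
    proof -
      have "1 \<le> \<bar>Im (z + \<i>)\<bar>" using that by simp
      also have "\<dots> \<le> cmod (z + \<i>)" by (rule abs_Im_le_cmod)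
      finally show ?thesis .
    qed
    have oD: "open D" unfolding D_def
      by (intro open_Collect_conj open_Collect_less continuous_intros)
    have cC: "closed C" unfolding C_def
      by (intro closed_Collect_conj closed_Collect_le continuous_intros)
    have DC: "D \<subseteq> C" unfolding D_def C_def by auto
    have clD: "closure D \<subseteq> C" using closure_minimal[OF DC cC] .
    have CU: "C \<subseteq> U" using U(2) unfolding C_def by auto
    have holC: "h holomorphic_on C" unfolding h_def
      using holomorphic_on_subset[OF hol CU] ne unfolding C_def
      by (intro holomorphic_intros) auto
    have holD: "h holomorphic_on interior D"
      using interior_open[OF oD] holomorphic_on_subset[OF holC DC] by simp
    have contD: "continuous_on (closure D) h"
      using holomorphic_on_imp_continuous_on[OF holC] clD continuous_on_subset by blast
    have bD: "bounded D" unfolding D_def bounded_iff by (intro exI[of _ R]) auto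
    have fr: "cmod (h z) \<le> 1" if "z \<in> frontier D" for z
    proof -
      have zC: "z \<in> C" and zD: "z \<notin> D" using that clD interior_open[OF oD]
        unfolding frontier_def by auto
      have hz: "cmod (h z) = cmod (g z) ^ n / cmod (z + \<i>)"
        unfolding h_def by (simp add: norm_divide norm_power)
      show ?thesis
      proof (cases "Im z = 0")
        case True
        then have "z = of_real (Re z)" by (simp add: complex_eq_iff)
        then have "cmod (g z) \<le> 1" using real1 by metis
        then have "cmod (g z) ^ n \<le> 1" by (simp add: power_le_one)
        moreover have "1 \<le> cmod (z + \<i>)" using ge1 zC unfolding C_def by auto
        ultimately show ?thesis unfolding hz by (simp add: divide_le_eq_1)
      next
        case False
        then have iz: "0 < Im z" using zC unfolding C_def by auto
        then have Rz: "cmod z = R" using zC zD unfolding C_def D_def by auto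
        have "cmod (g z) \<le> B1" using bnd[OF iz] unfolding B1_def by auto
        then have "cmod (g z) ^ n \<le> B1 ^ n" by (simp add: power_mono)
        moreover have "cmod z - 1 \<le> cmod (z + \<i>)"
          using norm_triangle_ineq2[of z "-\<i>"] by simp
        moreover have "0 < B1 ^ n" unfolding B1_def by simp
        ultimately have "cmod (g z) ^ n \<le> cmod (z + \<i>)" using Rz norm_ge_zero[of z0] unfolding R_def by linarith
        moreover have "0 < cmod (z + \<i>)" using ne iz by simp
        ultimately show ?thesis unfolding hz by (simp add: divide_le_eq_1)
      qed
    qed
    have "0 < B1 ^ n" unfolding B1_def by simp
    then have z0D: "z0 \<in> D" unfolding D_def R_def using iz0 by simp
    have "cmod (h z0) \<le> 1" by (rule maximum_modulus_frontier[OF holD contD bD fr z0D])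
    moreover have "cmod (h z0) = cmod (g z0) ^ n / cmod (z0 + \<i>)"
      unfolding h_def by (simp add: norm_divide norm_power)
    moreover have "0 < cmod (z0 + \<i>)" using ne iz0 by simp
    ultimately have "cmod (g z0) ^ n \<le> cmod (z0 + \<i>)" by (simp add: divide_le_eq_1 split: if_splits)
    then show False using n by simp
  qed
qed

lemma ident_sq:
  fixes a p m :: complex and y :: real
  shows "(cmod (a + \<i> * of_real y * p))\<^sup>2 - (cmod (a - \<i> * of_real y * m))\<^sup>2
     = y * (2 * Re (\<i> * cnj a * (p + m)) + y * ((cmod p)\<^sup>2 - (cmod m)\<^sup>2))"
  by (simp only: cmod_power2) (simp add: algebra_simps power2_eq_square)

lemma phase_deriv:
  fixes G :: "complex \<Rightarrow> complex" and x :: real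
  assumes der: "(G has_field_derivative G') (at (of_real x))"
    and ineq: "\<And>y. 0 < y \<Longrightarrow> cmod (G (of_real x - \<i> * of_real y)) \<le> cmod (G (of_real x + \<i> * of_real y))"
  shows "Im (cnj (G (of_real x)) * G') \<le> 0"
proof -
  define z where "z = complex_of_real x"
  define a where "a = G z"
  define qp where "qp y = (G (z + \<i> * of_real y) - a) / (\<i> * of_real y)" for y :: real
  define qm where "qm y = (G (z - \<i> * of_real y) - a) / (- \<i> * of_real y)" for y :: real
  have lim: "((\<lambda>w. (G w - G z) / (w - z)) \<longlongrightarrow> G') (at z)"
    using der unfolding z_def has_field_derivative_iff by simp
  have fp: "filterlim (\<lambda>y::real. z + \<i> * of_real y) (at z) (at_right 0)"
  proof (rule filterlim_atI)
    show "((\<lambda>y::real. z + \<i> * of_real y) \<longlongrightarrow> z) (at_right 0)"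
      by (rule tendsto_eq_intros refl | simp)+
    show "\<forall>\<^sub>F y in at_right 0. z + \<i> * complex_of_real y \<noteq> z"
      by (rule eventually_mono[OF eventually_at_right_less]) simp
  qed
  have fm: "filterlim (\<lambda>y::real. z - \<i> * of_real y) (at z) (at_right 0)"
  proof (rule filterlim_atI)
    show "((\<lambda>y::real. z - \<i> * of_real y) \<longlongrightarrow> z) (at_right 0)"
      by (rule tendsto_eq_intros refl | simp)+
    show "\<forall>\<^sub>F y in at_right 0. z - \<i> * complex_of_real y \<noteq> z"
      by (rule eventually_mono[OF eventually_at_right_less]) simp
  qed
  have lp: "(qp \<longlongrightarrow> G') (at_right 0)"
    using filterlim_compose[OF lim fp] unfolding qp_def a_def by simp
  have lm: "(qm \<longlongrightarrow> G') (at_right 0)"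
    using filterlim_compose[OF lim fm] unfolding qm_def a_def by simp
  define L where "L y = 2 * Re (\<i> * cnj a * (qp y + qm y)) + y * ((cmod (qp y))\<^sup>2 - (cmod (qm y))\<^sup>2)" for y
  have "(L \<longlongrightarrow> 2 * Re (\<i> * cnj a * (G' + G')) + 0 * ((cmod G')\<^sup>2 - (cmod G')\<^sup>2)) (at_right 0)"
    unfolding L_def
    by (intro tendsto_intros lp lm)
  then have limL: "(L \<longlongrightarrow> 4 * Re (\<i> * cnj a * G')) (at_right 0)" by (simp add: algebra_simps)
  have ev: "\<forall>\<^sub>F y in at_right 0. 0 \<le> L y"
  proof (rule eventually_mono[OF eventually_at_right_less])
    fix y :: real assume y: "0 < y"
    then have y0: "y \<noteq> 0" by simp
    have e1: "G (z + \<i> * of_real y) = a + \<i> * of_real y * qp y"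
      unfolding qp_def using y0 by simp
    have e2: "G (z - \<i> * of_real y) = a - \<i> * of_real y * qm y"
      unfolding qm_def using y0 by simp
    have "cmod (G (z - \<i> * of_real y)) \<le> cmod (G (z + \<i> * of_real y))"
      using ineq y unfolding z_def by simp
    then have "(cmod (G (z - \<i> * of_real y)))\<^sup>2 \<le> (cmod (G (z + \<i> * of_real y)))\<^sup>2"
      by (simp add: power_mono)
    then have sq: "(cmod (a - \<i> * of_real y * qm y))\<^sup>2 \<le> (cmod (a + \<i> * of_real y * qp y))\<^sup>2"
      unfolding e1 e2 .
    then have "0 \<le> y * L y" using ident_sq[of a y "qp y" "qm y"] unfolding L_def by linarith
    then show "0 \<le> L y" using y by (simp add: zero_le_mult_iff)
  qed
  have "0 \<le> 4 * Re (\<i> * cnj a * G')"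
    by (rule tendsto_lowerbound[OF limL ev]) simp
  then show ?thesis unfolding a_def z_def by simp
qed

lemma arg_mono:
  fixes G :: "complex \<Rightarrow> complex" and x1 x2 :: real
  assumes hol: "G holomorphic_on UNIV"
    and x12: "x1 \<le> x2"
    and nonpos: "\<And>x. x1 \<le> x \<Longrightarrow> x \<le> x2 \<Longrightarrow> G (of_real x) \<notin> \<real>\<^sub>\<le>\<^sub>0"
    and ph: "\<And>x. x1 \<le> x \<Longrightarrow> x \<le> x2 \<Longrightarrow> Im (cnj (G (of_real x)) * deriv G (of_real x)) \<le> 0"
  shows "Arg (G (of_real x2)) \<le> Arg (G (of_real x1))"
proof -
  define F where "F t = Im (Ln (G (of_real t)))" for t :: real
  have "F x2 \<le> F x1"
  proof (rule DERIV_nonpos_imp_nonincreasing[OF x12])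
    fix x assume x: "x1 \<le> x" "x \<le> x2"
    define z where "z = complex_of_real x"
    have Gz: "G z \<notin> \<real>\<^sub>\<le>\<^sub>0" using nonpos x unfolding z_def by simp
    then have Gz0: "G z \<noteq> 0" by auto
    have dG: "(G has_field_derivative deriv G z) (at z)"
      using hol by (meson UNIV_I field_differentiable_derivI holomorphic_on_imp_differentiable_at open_UNIV)
    have dL: "((\<lambda>w. Ln (G w)) has_field_derivative (deriv G z * inverse (G z))) (at z)"
      using DERIV_chain2[OF has_field_derivative_Ln[OF Gz] dG] by (simp add: mult.commute)
    have "((\<lambda>t. Ln (G (of_real t))) has_vector_derivative (deriv G z * inverse (G z))) (at x)"
      using has_vector_derivative_real_field[OF dL[unfolded z_def]] z_def by simp
    then have "((\<lambda>t. Im (Ln (G (of_real t)))) has_derivative (\<lambda>h. Im (h *\<^sub>R (deriv G z * inverse (G z))))) (at x)"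
      unfolding has_vector_derivative_def by (rule has_derivative_Im)
    moreover have "(\<lambda>h. Im (h *\<^sub>R (deriv G z * inverse (G z)))) = (*) (Im (deriv G z * inverse (G z)))"
      by (auto simp: fun_eq_iff)
    ultimately have "DERIV F x :> Im (deriv G z * inverse (G z))"
      unfolding F_def has_field_derivative_def by simp
    moreover have "Im (deriv G z * inverse (G z)) \<le> 0"
    proof -
      have "deriv G z * inverse (G z) = (cnj (G z) * deriv G z) / of_real ((cmod (G z))\<^sup>2)"
        using Gz0 by (simp add: complex_norm_square field_simps) (simp add: complex_norm_square[symmetric])
      then have "Im (deriv G z * inverse (G z)) = Im (cnj (G z) * deriv G z) / (cmod (G z))\<^sup>2"
        by (simp add: Im_divide_of_real)
      moreover have "Im (cnj (G z) * deriv G z) \<le> 0" using ph x unfolding z_def by simp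
      ultimately show ?thesis by (metis divide_nonpos_nonneg zero_le_power2)
    qed
    ultimately show "\<exists>y. DERIV F x :> y \<and> y \<le> 0" by blast
  qed
  moreover have "G (of_real x1) \<noteq> 0" "G (of_real x2) \<noteq> 0"
    using nonpos[of x1] nonpos[of x2] x12 by auto
  ultimately show ?thesis unfolding F_def by (simp add: Arg_eq_Im_Ln)
qed

lemma id1: "1 - 1 / (1 + \<i> * of_real t) = of_real (t / (1 + t\<^sup>2)) * (of_real t + \<i>)" for t :: real
proof -
  have p: "0 < 1 + t * t" by (simp add: add_pos_nonneg)
  have q: "1 + (t * (t * (t * t)) + t * (t * 2)) = (1 + t * t) * (1 + t * t)" by (simp add: algebra_simps)
  have q2: "0 < 1 + (t * (t * (t * t)) + t * (t * 2))" unfolding q using p by simp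
  show ?thesis using p q2 by (simp add: complex_eq_iff Re_divide Im_divide power2_eq_square field_simps)
qed
lemma id2: "1 - 1 / (1 + \<i> * of_real (- t)) = of_real (t / (1 + t\<^sup>2)) * (of_real t - \<i>)" for t :: real
proof -
  have p: "0 < 1 + t * t" by (simp add: add_pos_nonneg)
  have q: "1 + (t * (t * (t * t)) + t * (t * 2)) = (1 + t * t) * (1 + t * t)" by (simp add: algebra_simps)
  have q2: "0 < 1 + (t * (t * (t * t)) + t * (t * 2))" unfolding q using p by simp
  show ?thesis using p q2 by (simp add: complex_eq_iff Re_divide Im_divide power2_eq_square field_simps)
qed

lemma open_nz:
  fixes G :: "complex \<Rightarrow> complex"
  assumes "G holomorphic_on UNIV"
  shows "open {z. G z \<noteq> 0}"
proof -
  have "continuous_on UNIV G" using assms holomorphic_on_imp_continuous_on by blast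
  then show ?thesis by (intro open_Collect_neq) (auto intro: continuous_intros)
qed

lemma core:
  fixes E f :: "complex \<Rightarrow> complex" and M B \<alpha> \<xi> a_l a_r x0 :: real
  assumes holE: "E holomorphic_on UNIV" and holf: "f holomorphic_on UNIV"
    and HB: "\<And>z. 0 < Im z \<Longrightarrow> cmod (E (cnj z)) < cmod (E z)"
    and Enz: "\<And>z. 0 \<le> Im z \<Longrightarrow> E z \<noteq> 0"
    and freal: "\<And>x::real. f (of_real x) \<in> \<real>"
    and b1: "\<And>z. 0 < Im z \<Longrightarrow> cmod (f z) \<le> B * cmod (E z)"
    and b2: "\<And>z. 0 < Im z \<Longrightarrow> cmod (f (cnj z)) \<le> B * cmod (E z)"
    and Mpos: "0 < M"
    and rb: "\<And>x::real. cmod (f (of_real x)) \<le> M * cmod (E (of_real x))"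
    and fxi: "f (of_real \<xi>) = of_real (M * cmod (E (of_real \<xi>)))"
    and Exi: "exp (\<i> * of_real \<alpha>) * E (of_real \<xi>) = of_real (cmod (E (of_real \<xi>)))"
    and pos: "\<And>x. a_l < x \<Longrightarrow> x < a_r \<Longrightarrow> 0 < Re (exp (\<i> * of_real \<alpha>) * E (of_real x))"
    and xi: "a_l < \<xi>" "\<xi> < a_r"
    and x0: "a_l < x0" "x0 < a_r"
  shows "M * Re (exp (\<i> * of_real \<alpha>) * E (of_real x0)) \<le> Re (f (of_real x0))"
proof -
  define c where "c = exp (\<i> * complex_of_real \<alpha>)"
  have c1: "cmod c = 1" unfolding c_def by simp
  have Bnn: "0 \<le> B"
  proof -
    have "cmod (f \<i>) \<le> B * cmod (E \<i>)" using b1[of \<i>] by simp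
    moreover have "0 < cmod (E \<i>)" using Enz[of \<i>] by simp
    ultimately show ?thesis by (smt (verit) norm_ge_zero mult_nonpos_nonneg mult_neg_pos)
  qed
  have U0: "{z. 0 \<le> Im z} \<subseteq> {z. E z \<noteq> 0}" using Enz by auto
  have S1: "cmod (f z) \<le> M * cmod (E z)" if "0 \<le> Im z" for z
  proof -
    have "cmod (f z / (of_real M * E z)) \<le> 1"
    proof (rule PL[where U = "{z. E z \<noteq> 0}" and B = "B / M" and g = "\<lambda>z. f z / (of_real M * E z)"])
      show "(\<lambda>z. f z / (of_real M * E z)) holomorphic_on {z. E z \<noteq> 0}"
        using Mpos by (intro holomorphic_intros holomorphic_on_subset[OF holf] holomorphic_on_subset[OF holE]) auto
      show "open {z. E z \<noteq> 0}" by (rule open_nz[OF holE])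
      show "{z. 0 \<le> Im z} \<subseteq> {z. E z \<noteq> 0}" by (rule U0)
      show "cmod (f w / (of_real M * E w)) \<le> B / M" if "0 < Im w" for w
      proof -
        have "0 < cmod (E w)" using Enz[of w] that by simp
        then show ?thesis using b1[OF that] Mpos
          by (simp add: norm_divide norm_mult divide_le_eq field_simps)
      qed
      show "cmod (f (of_real x) / (of_real M * E (of_real x))) \<le> 1" for x
      proof -
        have "0 < cmod (E (of_real x))" using Enz[of "of_real x"] by simp
        then show ?thesis using rb[of x] Mpos
          by (simp add: norm_divide norm_mult divide_le_eq field_simps)
      qed
      show "0 \<le> Im z" by (rule that)
    qed
    moreover have "0 < cmod (E z)" using Enz[OF that] by simp
    ultimately show ?thesis using Mpos by (simp add: norm_divide norm_mult divide_le_eq field_simps)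
  qed
  define G where "G lam z = c * E z - f z / (of_real M * lam)" for lam z
  have holG: "G lam holomorphic_on UNIV" if "lam \<noteq> 0" for lam
    unfolding G_def using Mpos that by (intro holomorphic_intros holE holf) auto
  have S2: "(1 - 1 / cmod lam) * cmod (E z) \<le> cmod (G lam z)" if "1 < cmod lam" "0 \<le> Im z" for lam z
  proof -
    have "cmod (f z / (of_real M * lam)) = cmod (f z) / (M * cmod lam)"
      using Mpos by (simp add: norm_divide norm_mult)
    also have "\<dots> \<le> M * cmod (E z) / (M * cmod lam)"
      using S1[OF that(2)] Mpos that(1) by (intro divide_right_mono) auto
    also have "\<dots> = cmod (E z) / cmod lam" using Mpos by simp
    finally have "cmod (f z / (of_real M * lam)) \<le> cmod (E z) / cmod lam" .
    moreover have "cmod (c * E z) = cmod (E z)" using c1 by (simp add: norm_mult)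
    moreover have "cmod (c * E z) - cmod (f z / (of_real M * lam)) \<le> cmod (G lam z)"
      unfolding G_def by (rule norm_triangle_ineq2)
    ultimately show ?thesis by (simp add: algebra_simps)
  qed
  have Gnz: "G lam z \<noteq> 0" if "1 < cmod lam" "0 \<le> Im z" for lam z
  proof -
    have "0 < 1 - 1 / cmod lam" using that(1) by (simp add: divide_less_eq_1)
    moreover have "0 < cmod (E z)" using Enz[OF that(2)] by simp
    ultimately have "0 < (1 - 1 / cmod lam) * cmod (E z)" by simp
    then show ?thesis using S2[OF that] by auto
  qed
  have S3: "cmod (G lam (cnj z)) \<le> cmod (G lam z)" if lam: "1 < cmod lam" and z: "0 < Im z" for lam z
  proof -
    have lam0: "lam \<noteq> 0" using lam by auto
    have k: "0 < 1 - 1 / cmod lam" using lam by (simp add: divide_less_eq_1)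
    define g where "g w = cnj (G lam (cnj w)) / G lam w" for w
    have "cmod (g z) \<le> 1"
    proof (rule PL[where U = "{w. G lam w \<noteq> 0}" and g = g
          and B = "(1 + B / (M * cmod lam)) / (1 - 1 / cmod lam)"])
      have "(cnj \<circ> G lam \<circ> cnj) field_differentiable at w" for w
        using holG[OF lam0] field_differentiable_cnj_cnj
        by (meson UNIV_I holomorphic_on_imp_differentiable_at open_UNIV)
      then have hc: "(\<lambda>w. cnj (G lam (cnj w))) holomorphic_on {w. G lam w \<noteq> 0}"
        by (simp add: holomorphic_on_def o_def field_differentiable_at_within)
      have hG: "G lam holomorphic_on {w. G lam w \<noteq> 0}"
        using holG[OF lam0] by (rule holomorphic_on_subset) simp
      show "g holomorphic_on {w. G lam w \<noteq> 0}" unfolding g_def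
        by (rule holomorphic_on_divide[OF hc hG]) simp
      show "open {w. G lam w \<noteq> 0}" by (rule open_nz[OF holG[OF lam0]])
      show "{w. 0 \<le> Im w} \<subseteq> {w. G lam w \<noteq> 0}" using Gnz[OF lam] by auto
      show "cmod (g w) \<le> (1 + B / (M * cmod lam)) / (1 - 1 / cmod lam)" if w: "0 < Im w" for w
      proof -
        have Ew: "0 < cmod (E w)" using Enz[of w] w by simp
        have "cmod (G lam (cnj w)) \<le> cmod (c * E (cnj w)) + cmod (f (cnj w) / (of_real M * lam))"
          unfolding G_def by (rule norm_triangle_ineq4)
        also have "\<dots> = cmod (E (cnj w)) + cmod (f (cnj w)) / (M * cmod lam)"
          using c1 Mpos by (simp add: norm_mult norm_divide)
        also have "\<dots> \<le> cmod (E w) + B * cmod (E w) / (M * cmod lam)"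
          using HB[OF w] b2[OF w] Mpos lam by (intro add_mono divide_right_mono) auto
        also have "\<dots> = (1 + B / (M * cmod lam)) * cmod (E w)" by (simp add: algebra_simps)
        finally have num: "cmod (G lam (cnj w)) \<le> (1 + B / (M * cmod lam)) * cmod (E w)" .
        have den: "(1 - 1 / cmod lam) * cmod (E w) \<le> cmod (G lam w)" using S2[OF lam] w by simp
        have dpos: "0 < (1 - 1 / cmod lam) * cmod (E w)" using k Ew by simp
        have nn: "0 \<le> (1 + B / (M * cmod lam)) * cmod (E w)" using Bnn Mpos lam
          by (intro mult_nonneg_nonneg add_nonneg_nonneg divide_nonneg_nonneg) auto
        have "cmod (g w) = cmod (G lam (cnj w)) / cmod (G lam w)" unfolding g_def by (simp add: norm_divide)
        also have "\<dots> \<le> ((1 + B / (M * cmod lam)) * cmod (E w)) / ((1 - 1 / cmod lam) * cmod (E w))"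
          by (rule frac_le) (use num den dpos nn in auto)
        also have "\<dots> = (1 + B / (M * cmod lam)) / (1 - 1 / cmod lam)" using Ew by simp
        finally show ?thesis .
      qed
      show "cmod (g (of_real x)) \<le> 1" for x
        unfolding g_def by (simp add: norm_divide divide_le_eq_1)
      show "0 \<le> Im z" using z by simp
    qed
    moreover have "0 < cmod (G lam z)" using Gnz[OF lam] z by simp
    ultimately show ?thesis unfolding g_def by (simp add: norm_divide divide_le_eq_1)
  qed
  have S4: "Im (cnj (G lam (of_real x)) * deriv (G lam) (of_real x)) \<le> 0" if lam: "1 < cmod lam" for lam x
  proof (rule phase_deriv)
    have lam0: "lam \<noteq> 0" using lam by auto
    show "(G lam has_field_derivative deriv (G lam) (of_real x)) (at (of_real x))"
      using holG[OF lam0]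
      by (meson UNIV_I field_differentiable_derivI holomorphic_on_imp_differentiable_at open_UNIV)
    show "cmod (G lam (of_real x - \<i> * of_real y)) \<le> cmod (G lam (of_real x + \<i> * of_real y))"
      if "0 < y" for y
      using S3[OF lam, of "of_real x + \<i> * of_real y"] that by (simp add: complex_cnj_diff)
  qed
  have S5: "G lam (of_real x) \<notin> \<real>\<^sub>\<le>\<^sub>0" if lam: "1 < cmod lam" and x: "a_l < x" "x < a_r" for lam x
  proof
    assume np: "G lam (of_real x) \<in> \<real>\<^sub>\<le>\<^sub>0"
    define u where "u = c * E (of_real x)"
    have Reu: "0 < Re u" using pos[OF x] unfolding u_def c_def by simp
    have nu: "cmod u = cmod (E (of_real x))" unfolding u_def using c1 by (simp add: norm_mult)
    have "G lam (of_real x) * cnj u = u * cnj u - f (of_real x) * cnj u / (of_real M * lam)"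
      unfolding G_def u_def by (simp add: algebra_simps)
    then have "Re (G lam (of_real x) * cnj u) = (cmod u)\<^sup>2 - Re (f (of_real x) * cnj u / (of_real M * lam))"
      by (simp add: cmod_power2 power2_eq_square[symmetric])
    moreover have "Re (f (of_real x) * cnj u / (of_real M * lam)) \<le> cmod (f (of_real x) * cnj u / (of_real M * lam))"
      by (rule complex_Re_le_cmod)
    moreover have "cmod (f (of_real x) * cnj u / (of_real M * lam)) = cmod (f (of_real x)) * cmod u / (M * cmod lam)"
      using Mpos by (simp add: norm_mult norm_divide)
    moreover have "cmod (f (of_real x)) * cmod u / (M * cmod lam) \<le> (M * cmod u) * cmod u / (M * cmod lam)"
      using rb[of x] nu Mpos lam by (intro divide_right_mono mult_right_mono) auto
    moreover have "(M * cmod u) * cmod u / (M * cmod lam) = (cmod u)\<^sup>2 / cmod lam"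
      using Mpos by (simp add: power2_eq_square)
    moreover have "(cmod u)\<^sup>2 / cmod lam < (cmod u)\<^sup>2"
    proof -
      have "0 < (cmod u)\<^sup>2" using Reu by (metis complex_Re_le_cmod less_le_trans zero_less_power)
      then show ?thesis using lam by (simp add: divide_less_eq)
    qed
    ultimately have gt: "0 < Re (G lam (of_real x) * cnj u)" by linarith
    have "Im (G lam (of_real x)) = 0" "Re (G lam (of_real x)) \<le> 0"
      using np by (auto simp: complex_nonpos_Reals_iff)
    then have "Re (G lam (of_real x) * cnj u) \<le> 0"
      using Reu by (simp add: mult_nonpos_nonneg)
    then show False using gt by simp
  qed
  define e where "e = cmod (E (of_real \<xi>))"
  have e0: "0 < e" unfolding e_def using Enz[of "of_real \<xi>"] by simp
  have Gxi: "G lam (of_real \<xi>) = of_real e * (1 - 1 / lam)" if "lam \<noteq> 0" for lam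
    using Exi fxi Mpos that unfolding G_def c_def e_def by (simp add: field_simps)
  have Gnz1: "1 < cmod (1 + \<i> * complex_of_real t)" if "t \<noteq> 0" for t :: real
  proof -
    have "1 < (cmod (1 + \<i> * complex_of_real t))\<^sup>2" using that by (simp add: cmod_power2)
    then show ?thesis by (smt (verit) norm_ge_zero power_le_one)
  qed
  define w where "w = c * E (of_real x0) - f (of_real x0) / of_real M"
  define tn where "tn n = inverse (real (Suc n))" for n
  have tpos: "0 < tn n" for n unfolding tn_def by simp
  have tlim: "tn \<longlonglongrightarrow> 0" unfolding tn_def by (rule LIMSEQ_inverse_real_of_nat)
  have Glim: "(\<lambda>n. G (1 + \<i> * of_real (s * tn n)) (of_real x0)) \<longlonglongrightarrow> w" for s :: real
  proof -
    have "(\<lambda>n. G (1 + \<i> * of_real (s * tn n)) (of_real x0)) \<longlonglongrightarrow>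
        c * E (of_real x0) - f (of_real x0) / (of_real M * (1 + \<i> * of_real (s * 0)))"
      unfolding G_def using Mpos by (intro tendsto_intros tlim) auto
    then show ?thesis unfolding w_def by simp
  qed
  show ?thesis
  proof (rule ccontr)
    assume "\<not> ?thesis"
    then have lt: "Re (f (of_real x0)) < M * Re (c * E (of_real x0))" unfolding c_def by simp
    have Rew: "0 < Re w" unfolding w_def using lt Mpos by (simp add: field_simps)
    then have wnp: "w \<notin> \<real>\<^sub>\<le>\<^sub>0" by (auto simp: complex_nonpos_Reals_iff)
    have argw: "\<bar>Arg w\<bar> < pi / 2" using Rew Arg_Re_pos by blast
    have ArgGlim: "(\<lambda>n. Arg (G (1 + \<i> * of_real (s * tn n)) (of_real x0))) \<longlonglongrightarrow> Arg w" for s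
      by (rule tendsto_Arg[OF Glim wnp])
    have x0ne: "x0 \<noteq> \<xi>"
    proof
      assume "x0 = \<xi>"
      then have "Re (f (of_real x0)) = M * e" "Re (c * E (of_real x0)) = e"
        using fxi Exi unfolding c_def e_def by (simp_all add: Exi)
      then show False using lt by simp
    qed
    have mono: "Arg (G lam (of_real x2)) \<le> Arg (G lam (of_real x1))"
      if lam: "1 < cmod lam" and x: "a_l < x1" "x1 \<le> x2" "x2 < a_r" for lam x1 x2
    proof -
      have l0: "lam \<noteq> 0" using lam by auto
      show ?thesis
      proof (rule arg_mono[OF holG[OF l0] x(2)])
        show "G lam (of_real y) \<notin> \<real>\<^sub>\<le>\<^sub>0" if "x1 \<le> y" "y \<le> x2" for y
          using S5[OF lam, of y] that x by simp
        show "Im (cnj (G lam (of_real y)) * deriv (G lam) (of_real y)) \<le> 0" for y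
          by (rule S4[OF lam])
      qed
    qed
    show False
    proof (cases "\<xi> < x0")
      case True
      have le: "Arg (G (1 + \<i> * of_real (- 1 * tn n)) (of_real x0)) \<le> Arg (of_real (tn n) - \<i>)" for n
      proof -
        have l1: "1 < cmod (1 + \<i> * of_real (- 1 * tn n))" by (rule Gnz1) (use tpos[of n] in simp)
        then have l0: "1 + \<i> * of_real (- 1 * tn n) \<noteq> 0" by auto
        have "G (1 + \<i> * of_real (- 1 * tn n)) (of_real \<xi>)
            = of_real (e * (tn n / (1 + (tn n)\<^sup>2))) * (of_real (tn n) - \<i>)"
          using Gxi[OF l0] id2[of "tn n"] by simp
        moreover have "0 < e * (tn n / (1 + (tn n)\<^sup>2))" using e0 tpos[of n]
          by (simp add: add_pos_nonneg)
        ultimately have "Arg (G (1 + \<i> * of_real (- 1 * tn n)) (of_real \<xi>)) = Arg (of_real (tn n) - \<i>)"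
          by (metis Arg_times_of_real)
        then show ?thesis using mono[OF l1 xi(1), of x0] True x0 by simp
      qed
      have l2: "(\<lambda>n. Arg (of_real (tn n) - \<i>)) \<longlonglongrightarrow> Arg (of_real 0 - \<i>)"
        by (intro tendsto_Arg tendsto_intros tlim) (auto simp: complex_nonpos_Reals_iff)
      have "Arg w \<le> Arg (of_real 0 - \<i>)"
        by (rule LIMSEQ_le[OF ArgGlim[of "-1"] l2]) (use le in simp)
      then show False using argw by simp
    next
      case False
      then have x0l: "x0 < \<xi>" using x0ne by simp
      have le: "Arg (of_real (tn n) + \<i>) \<le> Arg (G (1 + \<i> * of_real (1 * tn n)) (of_real x0))" for n
      proof -
        have l1: "1 < cmod (1 + \<i> * of_real (1 * tn n))" by (rule Gnz1) (use tpos[of n] in simp)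
        then have l0: "1 + \<i> * of_real (1 * tn n) \<noteq> 0" by auto
        have "G (1 + \<i> * of_real (1 * tn n)) (of_real \<xi>)
            = of_real (e * (tn n / (1 + (tn n)\<^sup>2))) * (of_real (tn n) + \<i>)"
          using Gxi[OF l0] id1[of "tn n"] by simp
        moreover have "0 < e * (tn n / (1 + (tn n)\<^sup>2))" using e0 tpos[of n]
          by (simp add: add_pos_nonneg)
        ultimately have "Arg (G (1 + \<i> * of_real (1 * tn n)) (of_real \<xi>)) = Arg (of_real (tn n) + \<i>)"
          by (metis Arg_times_of_real)
        then show ?thesis using mono[OF l1 x0(1) less_imp_le[OF x0l] xi(2)] by simp
      qed
      have l2: "(\<lambda>n. Arg (of_real (tn n) + \<i>)) \<longlonglongrightarrow> Arg (of_real 0 + \<i>)"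
        by (intro tendsto_Arg tendsto_intros tlim) (auto simp: complex_nonpos_Reals_iff)
      have "Arg (of_real 0 + \<i>) \<le> Arg w"
        by (rule LIMSEQ_le[OF l2 ArgGlim[of 1]]) (use le in simp)
      then show False using argw by simp
    qed
  qed
qed

lemma A_alpha_real: "A_alpha E \<alpha> (of_real x) = of_real (Re (exp (\<i> * of_real \<alpha>) * E (of_real x)))"
proof -
  define w where "w = exp (\<i> * of_real \<alpha>) * E (of_real x)"
  have "cnj (exp (\<i> * complex_of_real \<alpha>)) = exp (- \<i> * complex_of_real \<alpha>)"
    by (simp add: exp_cnj)
  then have "exp (- \<i> * complex_of_real \<alpha>) * sharp E (of_real x) = cnj w"
    unfolding sharp_def w_def by simp
  then have "A_alpha E \<alpha> (of_real x) = (w + cnj w) / 2"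
    unfolding A_alpha_def w_def by simp
  also have "\<dots> = of_real (Re w)" by (simp only: complex_add_cnj) simp
  finally show ?thesis unfolding w_def .
qed

theorem corollary2:
  fixes E f :: "complex \<Rightarrow> complex" and \<xi> \<alpha> a_l a_r :: real
  assumes "hermite_biehler E"
    and "\<forall>x::real. E (complex_of_real x) \<noteq> 0"
    and "f \<in> H_inf E"
    and "real_entire f"
    and "cmod (f (complex_of_real \<xi>)) = cmod (E (complex_of_real \<xi>)) * sup_norm f E"
    and "E (complex_of_real \<xi>) = exp (- \<i> * complex_of_real \<alpha>) * complex_of_real (cmod (E (complex_of_real \<xi>)))"
    and "a_l < \<xi>" and "\<xi> < a_r"
    and "A_alpha E \<alpha> (complex_of_real a_l) = 0"
    and "A_alpha E \<alpha> (complex_of_real a_r) = 0"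
    and "\<forall>t. a_l < t \<and> t < a_r \<longrightarrow> A_alpha E \<alpha> (complex_of_real t) \<noteq> 0"
  shows "\<forall>x. a_l \<le> x \<and> x \<le> a_r \<longrightarrow>
           cmod (f (complex_of_real x)) \<ge> sup_norm f E * Re (A_alpha E \<alpha> (complex_of_real x))"
proof -
  note hb = assms(1)[unfolded hermite_biehler_def]
  have holE: "E holomorphic_on UNIV" and HB: "\<And>z. 0 < Im z \<Longrightarrow> cmod (E (cnj z)) < cmod (E z)"
    using hb by auto
  have Enz: "E z \<noteq> 0" if "0 \<le> Im z" for z
  proof (cases "Im z = 0")
    case True
    then have "z = of_real (Re z)" by (simp add: complex_eq_iff)
    then show ?thesis using assms(2) by metis
  next
    case False
    then have "0 < Im z" using that by simp
    then have "cmod (E (cnj z)) < cmod (E z)" by (rule HB)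
    then show ?thesis by auto
  qed
  note hf = assms(3)[unfolded H_inf_def, simplified]
  have holf: "f holomorphic_on UNIV" using hf by simp
  have freal: "\<And>x::real. f (of_real x) \<in> \<real>" using assms(4) unfolding real_entire_def by simp
  obtain B1 where B1: "\<And>z. z \<in> upper_half_plane \<Longrightarrow> cmod (f z / E z) \<le> B1"
    using hf unfolding bounded_iff by auto
  obtain B2 where B2: "\<And>z. z \<in> upper_half_plane \<Longrightarrow> cmod (sharp f z / E z) \<le> B2"
    using hf unfolding bounded_iff by auto
  define B where "B = max B1 B2"
  have b1: "cmod (f z) \<le> B * cmod (E z)" if "0 < Im z" for z
  proof -
    have "cmod (f z / E z) \<le> B" using B1[of z] that unfolding B_def upper_half_plane_def by auto
    moreover have "0 < cmod (E z)" using Enz[of z] that by simp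
    ultimately show ?thesis by (simp add: norm_divide divide_le_eq)
  qed
  have b2: "cmod (f (cnj z)) \<le> B * cmod (E z)" if "0 < Im z" for z
  proof -
    have "cmod (sharp f z / E z) \<le> B" using B2[of z] that unfolding B_def upper_half_plane_def by auto
    moreover have "0 < cmod (E z)" using Enz[of z] that by simp
    ultimately show ?thesis by (simp add: norm_divide divide_le_eq sharp_def)
  qed
  define q where "q z = f z / E z" for z
  define M where "M = sup_norm f E"
  have qB: "cmod (q (of_real x)) \<le> B1" for x :: real
  proof -
    define zn where "zn n = complex_of_real x + \<i> * of_real (inverse (real (Suc n)))" for n
    have "(\<lambda>n. complex_of_real x + \<i> * of_real (inverse (real (Suc n)))) \<longlonglongrightarrow> of_real x + \<i> * of_real 0"
      by (intro tendsto_intros LIMSEQ_inverse_real_of_nat)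
    then have zl: "zn \<longlonglongrightarrow> of_real x" unfolding zn_def by simp
    have "continuous (at (of_real x)) q"
    proof -
      have "continuous_on UNIV E" "continuous_on UNIV f"
        using holE holf holomorphic_on_imp_continuous_on by blast+
      then show ?thesis unfolding q_def using Enz[of "of_real x"]
        by (intro continuous_intros) (auto simp: continuous_on_eq_continuous_at)
    qed
    then have "(\<lambda>n. cmod (q (zn n))) \<longlonglongrightarrow> cmod (q (of_real x))"
      by (intro tendsto_norm isCont_tendsto_compose[OF _ zl])
    moreover have "cmod (q (zn n)) \<le> B1" for n
      using B1[of "zn n"] unfolding q_def zn_def upper_half_plane_def by simp
    ultimately show ?thesis by (meson LIMSEQ_le_const2)
  qed
  have bdd: "bdd_above (range (\<lambda>x::real. cmod (q (of_real x))))"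
    using qB by (auto intro!: bdd_aboveI[where M = B1])
  have qM: "cmod (q (of_real x)) \<le> M" for x :: real
    unfolding M_def sup_norm_def q_def[symmetric] by (rule cSUP_upper[OF UNIV_I bdd])
  have rb: "cmod (f (of_real x)) \<le> M * cmod (E (of_real x))" for x :: real
  proof -
    have "0 < cmod (E (of_real x))" using assms(2) by simp
    then show ?thesis using qM[of x] unfolding q_def by (simp add: norm_divide divide_le_eq)
  qed
  have M0: "0 \<le> M" using qM[of 0] norm_ge_zero order_trans by blast
  define c where "c = exp (\<i> * complex_of_real \<alpha>)"
  define e where "e = cmod (E (of_real \<xi>))"
  have Exi: "c * E (of_real \<xi>) = of_real e"
    unfolding c_def e_def by (subst assms(6)) (simp add: exp_minus field_simps)
  have A_eq: "Re (A_alpha E \<alpha> (of_real x)) = Re (c * E (of_real x))" for x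
    unfolding c_def by (simp add: A_alpha_real)
  define p where "p x = Re (c * E (of_real x))" for x
  have contp: "continuous_on S p" for S
  proof -
    have "continuous_on UNIV E" using holE holomorphic_on_imp_continuous_on by blast
    moreover have c1: "continuous_on S (\<lambda>x::real. complex_of_real x)" by (intro continuous_intros)
    ultimately have "continuous_on S (\<lambda>x. E (of_real x))" using continuous_on_compose2 by blast
    then show ?thesis unfolding p_def by (intro continuous_intros)
  qed
  have pnz: "p x \<noteq> 0" if "a_l < x" "x < a_r" for x
  proof
    assume "p x = 0"
    then have "A_alpha E \<alpha> (of_real x) = 0" unfolding A_alpha_real p_def c_def by simp
    with assms(11) that show False by auto
  qed
  have pxi: "0 < p \<xi>" unfolding p_def using Exi assms(2) unfolding e_def by simp
  have pos: "0 < p x" if x: "a_l < x" "x < a_r" for x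
  proof (rule ccontr)
    assume "\<not> 0 < p x"
    then have px: "p x < 0" using pnz[OF x] by simp
    show False
    proof (cases "x \<le> \<xi>")
      case True
      obtain y where "x \<le> y" "y \<le> \<xi>" "p y = 0"
        using IVT'[of p x 0 \<xi>] px pxi True contp by auto
      then show False using pnz[of y] x assms(8) by auto
    next
      case False
      obtain y where "\<xi> \<le> y" "y \<le> x" "p y = 0"
        using IVT2'[of p x 0 \<xi>] px pxi False contp by auto
      then show False using pnz[of y] x assms(7) by auto
    qed
  qed
  show ?thesis
  proof (intro allI impI)
    fix x assume x: "a_l \<le> x \<and> x \<le> a_r"
    have "M * Re (A_alpha E \<alpha> (of_real x)) \<le> cmod (f (of_real x))"
    proof (cases "x = a_l \<or> x = a_r")
      case True
      then have "Re (A_alpha E \<alpha> (of_real x)) = 0" using assms(9,10) by auto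
      then show ?thesis by simp
    next
      case False
      then have xi: "a_l < x" "x < a_r" using x by auto
      show ?thesis
      proof (cases "M = 0")
        case True then show ?thesis by simp
      next
        case False
        then have Mpos: "0 < M" using M0 by simp
        have fxr: "f (of_real \<xi>) = of_real (Re (f (of_real \<xi>)))"
          using freal[of \<xi>] by (metis Reals_cases Re_complex_of_real)
        have "\<bar>Re (f (of_real \<xi>))\<bar> = M * e"
          using assms(5) fxr unfolding M_def e_def
          by (metis mult.commute norm_of_real)
        then consider "Re (f (of_real \<xi>)) = M * e" | "Re (f (of_real \<xi>)) = - (M * e)" by linarith
        then have "M * Re (c * E (of_real x)) \<le> cmod (f (of_real x))"
        proof cases
          case 1
          have "M * Re (c * E (of_real x)) \<le> Re (f (of_real x))"
            unfolding c_def
          proof (rule core[OF holE holf HB Enz freal b1 b2 Mpos rb _ _ _ assms(7,8) xi])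
            show "f (of_real \<xi>) = of_real (M * cmod (E (of_real \<xi>)))" using fxr 1 unfolding e_def by simp
            show "exp (\<i> * of_real \<alpha>) * E (of_real \<xi>) = of_real (cmod (E (of_real \<xi>)))"
              using Exi unfolding c_def e_def .
            show "0 < Re (exp (\<i> * of_real \<alpha>) * E (of_real y))" if "a_l < y" "y < a_r" for y
              using pos[OF that] unfolding p_def c_def .
          qed auto
          then show ?thesis using complex_Re_le_cmod order_trans by blast
        next
          case 2
          have "M * Re (c * E (of_real x)) \<le> Re (- f (of_real x))"
            unfolding c_def
          proof (rule core[where f = "\<lambda>z. - f z", OF holE _ HB Enz _ _ _ Mpos _ _ _ _ assms(7,8) xi])
            show "(\<lambda>z. - f z) holomorphic_on UNIV" using holf by (intro holomorphic_intros)
            show "- f (of_real y) \<in> \<real>" for y using freal[of y] by simp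
            show "cmod (- f z) \<le> B * cmod (E z)" if "0 < Im z" for z using b1[OF that] by simp
            show "cmod (- f (cnj z)) \<le> B * cmod (E z)" if "0 < Im z" for z using b2[OF that] by simp
            show "cmod (- f (of_real y)) \<le> M * cmod (E (of_real y))" for y using rb[of y] by simp
            show "- f (of_real \<xi>) = of_real (M * cmod (E (of_real \<xi>)))" using fxr 2 unfolding e_def by simp
            show "exp (\<i> * of_real \<alpha>) * E (of_real \<xi>) = of_real (cmod (E (of_real \<xi>)))"
              using Exi unfolding c_def e_def .
            show "0 < Re (exp (\<i> * of_real \<alpha>) * E (of_real y))" if "a_l < y" "y < a_r" for y
              using pos[OF that] unfolding p_def c_def .
          qed
          moreover have "Re (- f (of_real x)) \<le> cmod (f (of_real x))"
            using complex_Re_le_cmod[of "- f (of_real x)"] by simp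
          ultimately show ?thesis by linarith
        qed
        then show ?thesis using A_eq by simp
      qed
    qed
    then show "sup_norm f E * Re (A_alpha E \<alpha> (of_real x)) \<le> cmod (f (of_real x))"
      unfolding M_def .
  qed
qed

end
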